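(* Let $p$ be a prime and $n\ge 1$, and suppose $p^n-1=st$ with positive integers $s<t$ and $\gcd(s,t)=1$. Let $\alpha$ be a generator of the multiplicative group $\mathbb{F}_{p^n}^\times$, and put $\beta=\alpha^t$, $\gamma=\alpha^s$. Let $\psi:\mathbb{F}_{p^n}\to\mathbb{F}_p$ be a fixed nonzero $\mathbb{F}_p$-linear map, and let $B=(B_{i,j})_{(i,j)\in\mathbb{Z}_s\times\mathbb{Z}_t}$ be given by $B_{i,j}=\psi(\beta^i\gamma^j)$. Then a subset $S\subset \mathbb{Z}_s\times\mathbb{Z}_t$ with $|S|=n$ is a sampling pattern if and only if it is a basis pattern.
   Context: Here $\mathbb{Z}_s=\mathbb{Z}/s\mathbb{Z}$, $\mathbb{Z}_t=\mathbb{Z}/t\mathbb{Z}$; the expression $\beta^i\gamma^j$ is well defined for $(i,j)\in\mathbb{Z}_s\times\mathbb{Z}_t$ since $\beta$ has order $s$ and $\gamma$ has order $t$, and $(i,j)\mapsto\beta^i\gamma^j$ is a bijection $\mathbb{Z}_s\times\mathbb{Z}_t\to\mathbb{F}_{p^n}^\times$. For $S\subset\mathbb{Z}_s\times\mathbb{Z}_t$, let $A|_S=\{\beta^i\gamma^j : (i,j)\in S\}\subset\mathbb{F}_{p^n}$. $S$ is a basis pattern if $A|_S$ is an $\mathbb{F}_p$-basis of $\mathbb{F}_{p^n}$. For $(a,b)\in\mathbb{Z}_s\times\mathbb{Z}_t$, the value pattern of $S$ under the shift $(a,b)$ is the vector $v_{a,b}=(B_{i+a,\,j+b})_{(i,j)\in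 S}\in\mathbb{F}_p^{S}\cong\mathbb{F}_p^n$ (indices taken mod $s$ and mod $t$). $S$ is a sampling pattern if the $p^n-1$ value patterns $v_{a,b}$, $(a,b)\in\mathbb{Z}_s\times\mathbb{Z}_t$, are pairwise distinct and are exactly the nonzero vectors of $\mathbb{F}_p^{S}$ (each occurring exactly once). *)

theory Defs
  imports Main "HOL-Computational_Algebra.Primes" "HOL-Library.Cardinality"
begin

definition prime_subfield :: "'a::field set" where
  "prime_subfield = range of_nat"

definition Fp_linear_functional :: "('a::field \<Rightarrow> 'a) \<Rightarrow> bool" where
  "Fp_linear_functional \<psi> \<longleftrightarrow>
     (\<forall>x. \<psi> x \<in> prime_subfield) \<and>
     (\<forall>x y. \<psi> (x + y) = \<psi> x + \<psi> y) \<and>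
     (\<forall>c x. c \<in> prime_subfield \<longrightarrow> \<psi> (c * x) = c * \<psi> x)"

definition Fp_basis :: "'a::field set \<Rightarrow> bool" where
  "Fp_basis X \<longleftrightarrow> finite X \<and>
     (\<forall>c. (\<forall>x\<in>X. c x \<in> prime_subfield) \<longrightarrow> (\<Sum>x\<in>X. c x * x) = 0 \<longrightarrow> (\<forall>x\<in>X. c x = 0)) \<and>
     (\<forall>y. \<exists>c. (\<forall>x\<in>X. c x \<in> prime_subfield) \<and> y = (\<Sum>x\<in>X. c x * x))"

text \<open>Z_s x Z_t is represented by {0..<s} x {0..<t}.  A|_S.\<close>
definition A_restr :: "'a::field \<Rightarrow> 'a \<Rightarrow> (nat \<times> nat) set \<Rightarrow> 'a set" where
  "A_restr \<beta> \<gamma> S = (\<lambda>(i,j). \<beta> ^ i * \<gamma> ^ j) ` S"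

definition basis_pattern :: "'a::field \<Rightarrow> 'a \<Rightarrow> (nat \<times> nat) set \<Rightarrow> bool" where
  "basis_pattern \<beta> \<gamma> S \<longleftrightarrow> Fp_basis (A_restr \<beta> \<gamma> S)"

text \<open>Value pattern v_{a,b}, a vector in F_p^S represented as a function that is 0 off S.\<close>
definition value_pattern ::
  "nat \<Rightarrow> nat \<Rightarrow> (nat \<Rightarrow> nat \<Rightarrow> 'a::zero) \<Rightarrow> (nat \<times> nat) set \<Rightarrow> nat \<times> nat \<Rightarrow> (nat \<times> nat \<Rightarrow> 'a)" where
  "value_pattern s t B S = (\<lambda>(a,b) (i,j). if (i,j) \<in> S then B ((i + a) mod s) ((j + b) mod t) else 0)"

definition nonzero_Fp_vectors :: "(nat \<times> nat) set \<Rightarrow> (nat \<times> nat \<Rightarrow> 'a::field) set" where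
  "nonzero_Fp_vectors S = {v. (\<forall>x. v x \<in> prime_subfield) \<and> (\<forall>x. x \<notin> S \<longrightarrow> v x = 0) \<and> v \<noteq> (\<lambda>_. 0)}"

definition sampling_pattern ::
  "nat \<Rightarrow> nat \<Rightarrow> (nat \<Rightarrow> nat \<Rightarrow> 'a::field) \<Rightarrow> (nat \<times> nat) set \<Rightarrow> bool" where
  "sampling_pattern s t B S \<longleftrightarrow>
     bij_betw (value_pattern s t B S) ({0..<s} \<times> {0..<t}) (nonzero_Fp_vectors S)"

end

theory Submission
  imports Defs "HOL-Library.FuncSet" "HOL-Number_Theory.Cong"
begin

lemma P_0: "0 \<in> prime_subfield" unfolding prime_subfield_def by (metis of_nat_0 rangeI)
lemma P_1: "1 \<in> prime_subfield" unfolding prime_subfield_def by (metis of_nat_1 rangeI)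
lemma P_add: "a \<in> prime_subfield \<Longrightarrow> b \<in> prime_subfield \<Longrightarrow> a + b \<in> prime_subfield"
  unfolding prime_subfield_def by (auto simp flip: of_nat_add)
lemma P_mult: "a \<in> prime_subfield \<Longrightarrow> b \<in> prime_subfield \<Longrightarrow> a * b \<in> prime_subfield"
  unfolding prime_subfield_def by (auto simp flip: of_nat_mult)
lemma P_uminus:
  assumes "(a::'a::{finite,field}) \<in> prime_subfield" shows "- a \<in> prime_subfield"
proof -
  obtain m where a: "a = of_nat m" using assms unfolding prime_subfield_def by auto
  define c where "c = CHAR('a)"
  have c: "c > 0" unfolding c_def by (rule finite_imp_CHAR_pos) simp
  have "(of_nat (c - 1) :: 'a) + 1 = 0" using c unfolding c_def
    by (metis Suc_diff_1 of_nat_CHAR of_nat_Suc add.commute)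
  hence m1: "(of_nat (c - 1) :: 'a) = - 1" by (simp add: eq_neg_iff_add_eq_0)
  have "- a = of_nat (m * (c - 1))" using m1 a by simp
  thus ?thesis unfolding prime_subfield_def by (metis rangeI)
qed
lemma P_diff: "(a::'a::{finite,field}) \<in> prime_subfield \<Longrightarrow> b \<in> prime_subfield \<Longrightarrow> a - b \<in> prime_subfield"
  using P_add P_uminus by (metis diff_conv_add_uminus)

lemma lin_0: "Fp_linear_functional \<psi> \<Longrightarrow> \<psi> 0 = 0"
  unfolding Fp_linear_functional_def by (metis add_cancel_right_right add_0)
lemma lin_diff: "Fp_linear_functional \<psi> \<Longrightarrow> \<psi> (a - b) = \<psi> a - \<psi> b"
  unfolding Fp_linear_functional_def by (metis diff_add_cancel eq_diff_eq)
lemma lin_sum: "Fp_linear_functional \<psi> \<Longrightarrow> \<psi> (sum f A) = (\<Sum>x\<in>A. \<psi> (f x))"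
  apply (induction A rule: infinite_finite_induct)
  using lin_0 by (auto simp: Fp_linear_functional_def)
lemma lin_comb:
  assumes lin: "Fp_linear_functional \<psi>" and cP: "\<forall>z\<in>X. c z \<in> prime_subfield"
  shows "\<psi> (x * (\<Sum>z\<in>X. c z * z)) = (\<Sum>z\<in>X. c z * \<psi> (x * z))"
proof -
  have "\<psi> (x * (\<Sum>z\<in>X. c z * z)) = (\<Sum>z\<in>X. \<psi> (c z * (x * z)))"
    by (simp add: sum_distrib_left lin_sum[OF lin] mult.left_commute)
  also have "\<dots> = (\<Sum>z\<in>X. c z * \<psi> (x * z))"
  proof (rule sum.cong)
    fix z assume "z \<in> X"
    hence "c z \<in> prime_subfield" using cP by blast
    thus "\<psi> (c z * (x * z)) = c z * \<psi> (x * z)" using lin unfolding Fp_linear_functional_def by blast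
  qed simp
  finally show ?thesis .
qed

lemma lin_smult: "Fp_linear_functional \<psi> \<Longrightarrow> c \<in> prime_subfield \<Longrightarrow> \<psi> (c * x) = c * \<psi> x"
  unfolding Fp_linear_functional_def by blast

lemma pow_mod_eq: "(x::'a::monoid_mult) ^ s = 1 \<Longrightarrow> x ^ (m mod s) = x ^ m"
proof -
  assume h: "x ^ s = 1"
  have "x ^ m = x ^ (s * (m div s) + m mod s)" by simp
  also have "\<dots> = (x ^ s) ^ (m div s) * x ^ (m mod s)" by (simp only: power_add power_mult)
  finally show ?thesis using h by simp
qed

lemma gen_facts:
  fixes \<alpha> :: "'a::{finite,field}"
  assumes gen: "\<forall>x::'a. x \<noteq> 0 \<longrightarrow> (\<exists>k::nat. \<alpha> ^ k = x)"
    and N: "N = CARD('a) - 1" and N2: "N \<ge> 2"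
  shows "\<alpha> \<noteq> 0" "\<alpha> ^ N = 1" "\<And>i j. \<alpha> ^ i = \<alpha> ^ j \<longleftrightarrow> i mod N = j mod N"
proof -
  have cardU: "card (UNIV - {0::'a}) = N" using N by (simp add: card_Diff_singleton)
  show a0: "\<alpha> \<noteq> 0"
  proof
    assume "\<alpha> = 0"
    have "UNIV - {0::'a} \<subseteq> {1}"
    proof
      fix x :: 'a assume "x \<in> UNIV - {0}"
      then obtain k where k: "\<alpha> ^ k = x" "x \<noteq> 0" using gen by auto
      thus "x \<in> {1}" using \<open>\<alpha> = 0\<close> by (cases k) auto
    qed
    hence "card (UNIV - {0::'a}) \<le> card {1::'a}" by (intro card_mono) auto
    thus False using cardU N2 by simp
  qed
  have sub: "(\<lambda>k. \<alpha> ^ k) ` A \<subseteq> UNIV - {0}" for A using a0 by auto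
  have inj: "inj_on (\<lambda>k. \<alpha> ^ k) {0..<N}"
  proof (rule inj_onI, rule ccontr)
    fix i j assume ij: "i \<in> {0..<N}" "j \<in> {0..<N}" "\<alpha> ^ i = \<alpha> ^ j" "i \<noteq> j"
    obtain i' j' where ij': "i' < j'" "j' < N" "\<alpha> ^ i' = \<alpha> ^ j'"
    proof (cases "i < j")
      case True thus ?thesis using that[of i j] ij by simp
    next
      case False thus ?thesis using that[of j i] ij by simp
    qed
    define d where "d = j' - i'"
    have d0: "d > 0" "d < N" using ij' d_def by auto
    have "\<alpha> ^ i' * \<alpha> ^ d = \<alpha> ^ j'" using ij'(1) by (simp add: d_def flip: power_add)
    hence "\<alpha> ^ i' * \<alpha> ^ d = \<alpha> ^ i' * 1" using ij' by simp
    hence d1: "\<alpha> ^ d = 1" using a0 by simp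
    have "UNIV - {0} \<subseteq> (\<lambda>k. \<alpha> ^ k) ` {0..<d}"
    proof
      fix x :: 'a assume "x \<in> UNIV - {0}"
      then obtain k where "\<alpha> ^ k = x" using gen by auto
      hence "x = \<alpha> ^ (k mod d)" using pow_mod_eq[OF d1] by simp
      thus "x \<in> (\<lambda>k. \<alpha> ^ k) ` {0..<d}" using d0 by auto
    qed
    hence "card (UNIV - {0::'a}) \<le> card {0..<d}" by (intro surj_card_le) simp_all
    thus False using cardU d0 by simp
  qed
  have img: "(\<lambda>k. \<alpha> ^ k) ` {0..<N} = UNIV - {0}"
    using card_subset_eq[OF _ sub[of "{0..<N}"]] card_image[OF inj] cardU by simp
  show aN: "\<alpha> ^ N = 1"
  proof -
    have "\<alpha> ^ N \<in> UNIV - {0}" using a0 by simp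
    then obtain k where k: "k < N" "\<alpha> ^ N = \<alpha> ^ k" using img by (metis atLeastLessThan_iff imageE)
    show ?thesis
    proof (cases "k = 0")
      case True thus ?thesis using k by simp
    next
      case False
      have "\<alpha> ^ k * \<alpha> ^ (N - k) = \<alpha> ^ k * 1" using k by (simp flip: power_add)
      hence "\<alpha> ^ (N - k) = \<alpha> ^ 0" using a0 by simp
      hence "N - k = 0" using inj_onD[OF inj, of "N - k" 0] k False by simp
      thus ?thesis using k by simp
    qed
  qed
  fix i j
  have "\<alpha> ^ i = \<alpha> ^ j \<longleftrightarrow> \<alpha> ^ (i mod N) = \<alpha> ^ (j mod N)" using pow_mod_eq[OF aN] by simp
  also have "\<dots> \<longleftrightarrow> i mod N = j mod N"
  proof
    assume "\<alpha> ^ (i mod N) = \<alpha> ^ (j mod N)"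
    moreover have "i mod N \<in> {0..<N}" "j mod N \<in> {0..<N}" using N2 by simp_all
    ultimately show "i mod N = j mod N" using inj_onD[OF inj] by blast
  qed simp
  finally show "\<alpha> ^ i = \<alpha> ^ j \<longleftrightarrow> i mod N = j mod N" .
qed

lemma card_V:
  fixes S :: "'b set"
  assumes "finite S"
  shows "card {v::'b \<Rightarrow> 'a::{finite,field}. (\<forall>k. v k \<in> prime_subfield) \<and> (\<forall>k. k \<notin> S \<longrightarrow> v k = 0)}
    = card (prime_subfield::'a set) ^ card S"
proof -
  let ?P = "prime_subfield :: 'a set"
  let ?h = "\<lambda>f k. if k \<in> S then f k else (0::'a)"
  have eq: "{v. (\<forall>k. v k \<in> ?P) \<and> (\<forall>k. k \<notin> S \<longrightarrow> v k = 0)} = ?h ` (S \<rightarrow>\<^sub>E ?P)"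
  proof (intro set_eqI iffI)
    fix v assume v: "v \<in> {v. (\<forall>k. v k \<in> ?P) \<and> (\<forall>k. k \<notin> S \<longrightarrow> v k = 0)}"
    have "restrict v S \<in> S \<rightarrow>\<^sub>E ?P" using v by auto
    moreover have "v = ?h (restrict v S)" using v by auto
    ultimately show "v \<in> ?h ` (S \<rightarrow>\<^sub>E ?P)" by blast
  next
    fix v assume "v \<in> ?h ` (S \<rightarrow>\<^sub>E ?P)"
    thus "v \<in> {v. (\<forall>k. v k \<in> ?P) \<and> (\<forall>k. k \<notin> S \<longrightarrow> v k = 0)}" using P_0 by auto
  qed
  have inj: "inj_on ?h (S \<rightarrow>\<^sub>E ?P)"
  proof (rule inj_onI)
    fix f g assume fg: "f \<in> S \<rightarrow>\<^sub>E ?P" "g \<in> S \<rightarrow>\<^sub>E ?P" "?h f = ?h g"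
    show "f = g"
    proof (rule PiE_ext[OF fg(1,2)])
      fix i assume "i \<in> S" thus "f i = g i" using fun_cong[OF fg(3), of i] by simp
    qed
  qed
  show ?thesis unfolding eq card_image[OF inj] card_PiE[OF assms] by simp
qed

lemma C_inj:
  fixes X :: "'a::{finite,field} set"
  assumes ind: "\<forall>c. (\<forall>x\<in>X. c x \<in> prime_subfield) \<longrightarrow> (\<Sum>x\<in>X. c x * x) = 0 \<longrightarrow> (\<forall>x\<in>X. c x = 0)"
  shows "inj_on (\<lambda>c. \<Sum>x\<in>X. c x * x) (X \<rightarrow>\<^sub>E prime_subfield)"
proof (rule inj_onI)
  fix c d assume cd: "c \<in> X \<rightarrow>\<^sub>E prime_subfield" "d \<in> X \<rightarrow>\<^sub>E prime_subfield"
    "(\<Sum>x\<in>X. c x * x) = (\<Sum>x\<in>X. d x * x)"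
  have "(\<Sum>x\<in>X. (c x - d x) * x) = 0" using cd(3) by (simp add: left_diff_distrib sum_subtractf)
  moreover have "\<forall>x\<in>X. c x - d x \<in> prime_subfield" using cd(1,2) P_diff by blast
  ultimately have "\<forall>x\<in>X. c x - d x = 0" using ind[rule_format, of "\<lambda>x. c x - d x"] by blast
  thus "c = d" using PiE_ext[OF cd(1,2)] by simp
qed

lemma basis_card:
  fixes X :: "'a::{finite,field} set"
  assumes "Fp_basis X"
  shows "card (prime_subfield::'a set) ^ card X = CARD('a)"
proof -
  have fin: "finite X" using assms unfolding Fp_basis_def by blast
  have inj: "inj_on (\<lambda>c. \<Sum>x\<in>X. c x * x) (X \<rightarrow>\<^sub>E prime_subfield)"
    using C_inj assms unfolding Fp_basis_def by blast
  have "(\<lambda>c. \<Sum>x\<in>X. c x * x) ` (X \<rightarrow>\<^sub>E prime_subfield) = UNIV"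
  proof (intro set_eqI iffI)
    fix y :: 'a
    obtain c where c: "\<forall>x\<in>X. c x \<in> prime_subfield" "y = (\<Sum>x\<in>X. c x * x)"
      using assms unfolding Fp_basis_def by blast
    have "restrict c X \<in> X \<rightarrow>\<^sub>E prime_subfield" using c by auto
    moreover have "y = (\<Sum>x\<in>X. restrict c X x * x)" using c by simp
    ultimately show "y \<in> (\<lambda>c. \<Sum>x\<in>X. c x * x) ` (X \<rightarrow>\<^sub>E prime_subfield)" by blast
  qed simp
  hence "card (X \<rightarrow>\<^sub>E (prime_subfield::'a set)) = CARD('a)" using card_image[OF inj] by simp
  thus ?thesis using card_PiE[OF fin, of "\<lambda>_. prime_subfield :: 'a set"] by simp
qed

lemma indep_span:
  fixes X :: "'a::{finite,field} set"
  assumes fin: "finite X"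
    and ind: "\<forall>c. (\<forall>x\<in>X. c x \<in> prime_subfield) \<longrightarrow> (\<Sum>x\<in>X. c x * x) = 0 \<longrightarrow> (\<forall>x\<in>X. c x = 0)"
    and card: "card (prime_subfield::'a set) ^ card X = CARD('a)"
  shows "\<exists>c. (\<forall>x\<in>X. c x \<in> prime_subfield) \<and> y = (\<Sum>x\<in>X. c x * x)"
proof -
  have inj: "inj_on (\<lambda>c. \<Sum>x\<in>X. c x * x) (X \<rightarrow>\<^sub>E prime_subfield)" using C_inj ind by blast
  have "card ((\<lambda>c. \<Sum>x\<in>X. c x * x) ` (X \<rightarrow>\<^sub>E prime_subfield)) = card (UNIV::'a set)"
    using card_image[OF inj] card_PiE[OF fin, of "\<lambda>_. prime_subfield :: 'a set"] card by simp
  hence "(\<lambda>c. \<Sum>x\<in>X. c x * x) ` (X \<rightarrow>\<^sub>E prime_subfield) = UNIV"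
    by (rule card_subset_eq[OF finite_class.finite_UNIV subset_UNIV])
  hence "y \<in> (\<lambda>c. \<Sum>x\<in>X. c x * x) ` (X \<rightarrow>\<^sub>E prime_subfield)" by simp
  then obtain c where c: "c \<in> X \<rightarrow>\<^sub>E prime_subfield" "y = (\<Sum>x\<in>X. c x * x)" by blast
  have "\<forall>x\<in>X. c x \<in> prime_subfield" using c(1) by (simp add: PiE_iff)
  thus ?thesis using c(2) by blast
qed

theorem mainTheorem1:
  fixes p n s t :: nat and \<alpha> :: "'a::{finite,field}" and \<psi> :: "'a \<Rightarrow> 'a"
    and S :: "(nat \<times> nat) set"
  assumes "prime p" and "n \<ge> 1"
    and "CARD('a) = p ^ n"
    and "p ^ n - 1 = s * t" and "0 < s" and "s < t" and "coprime s t"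
    and "\<forall>x::'a. x \<noteq> 0 \<longrightarrow> (\<exists>k::nat. \<alpha> ^ k = x)"
    and "Fp_linear_functional \<psi>" and "\<exists>x. \<psi> x \<noteq> 0"
    and "S \<subseteq> {0..<s} \<times> {0..<t}" and "card S = n"
  shows "sampling_pattern s t (\<lambda>i j. \<psi> ((\<alpha> ^ t) ^ i * (\<alpha> ^ s) ^ j)) S
     \<longleftrightarrow> basis_pattern (\<alpha> ^ t) (\<alpha> ^ s) S"
proof -
  note gen = assms(8) and lin = assms(9) and psi_nz = assms(10) and SI = assms(11) and cardS = assms(12)
  define N where "N = CARD('a) - 1"
  have N: "N = s * t" using assms(3,4) N_def by simp
  have N2: "N \<ge> 2"
  proof -
    have "1 * 2 \<le> s * t" using assms(5,6) by (intro mult_le_mono) auto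
    thus ?thesis using N by simp
  qed
  have a0: "\<alpha> \<noteq> 0" and aN: "\<alpha> ^ N = 1" and aeq: "\<And>i j. \<alpha> ^ i = \<alpha> ^ j \<longleftrightarrow> i mod N = j mod N"
    using gen_facts[OF gen N_def N2] by auto
  define \<beta> where "\<beta> = \<alpha> ^ t"
  define \<gamma> where "\<gamma> = \<alpha> ^ s"
  have bs: "\<beta> ^ s = 1" using aN N by (simp add: \<beta>_def mult.commute flip: power_mult)
  have gt: "\<gamma> ^ t = 1" using aN N by (simp add: \<gamma>_def flip: power_mult)
  define I where "I = {0..<s} \<times> {0..<t}"
  define e :: "nat \<times> nat \<Rightarrow> 'a" where "e = (\<lambda>(i,j). \<beta> ^ i * \<gamma> ^ j)"
  have e_alt: "e (a,b) = \<alpha> ^ (t * a + s * b)" for a b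
    by (simp add: e_def \<beta>_def \<gamma>_def power_add power_mult)
  have e_inj: "inj_on e I"
  proof (rule inj_onI)
    fix x y assume xy: "x \<in> I" "y \<in> I" "e x = e y"
    obtain a b a' b' where ab: "x = (a,b)" "y = (a',b')" by (cases x, cases y)
    have "(t * a + s * b) mod N = (t * a' + s * b') mod N" using xy(3) ab aeq e_alt by simp
    hence c: "[t * a + s * b = t * a' + s * b'] (mod s * t)" using N by (simp add: cong_def)
    have "[t * a + s * b = t * a' + s * b'] (mod s)" using cong_modulus_mult_nat[OF c] .
    moreover have "(t * a + s * b) mod s = (t * a) mod s" "(t * a' + s * b') mod s = (t * a') mod s" by simp_all
    ultimately have "[t * a = t * a'] (mod s)" unfolding cong_def by simp
    hence "[a = a'] (mod s)" using cong_mult_lcancel_nat[of t s a a'] assms(7) by (simp add: coprime_commute)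
    moreover have "a < s" "a' < s" using xy(1,2) ab I_def by auto
    ultimately have a: "a = a'" using cong_less_imp_eq_nat[of a s a'] by simp
    have "[s * b + t * a = s * b' + t * a'] (mod t)" using cong_modulus_mult_nat[of _ _ t s] c
      by (simp add: add.commute mult.commute)
    moreover have "(s * b + t * a) mod t = (s * b) mod t" "(s * b' + t * a') mod t = (s * b') mod t" by simp_all
    ultimately have "[s * b = s * b'] (mod t)" unfolding cong_def by simp
    hence "[b = b'] (mod t)" using cong_mult_lcancel_nat[of s t b b'] assms(7) by simp
    moreover have "b < t" "b' < t" using xy(1,2) ab I_def by auto
    ultimately have "b = b'" using cong_less_imp_eq_nat[of b t b'] by simp
    thus "x = y" using a ab by simp
  qed
  have e_bij: "bij_betw e I (UNIV - {0})"
  proof -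
    have sub: "e ` I \<subseteq> UNIV - {0}" using a0 by (auto simp: e_def \<beta>_def \<gamma>_def)
    have "card (e ` I) = card (UNIV - {0::'a})"
      using card_image[OF e_inj] N N_def by (simp add: I_def card_Diff_singleton)
    hence "e ` I = UNIV - {0}" using sub by (intro card_subset_eq) auto
    thus ?thesis using e_inj by (simp add: bij_betw_def)
  qed
  define L where "L = (\<lambda>x::'a. \<lambda>k. if k \<in> S then \<psi> (x * e k) else 0)"
  define V where "V = {v::nat\<times>nat \<Rightarrow> 'a. (\<forall>k. v k \<in> prime_subfield) \<and> (\<forall>k. k \<notin> S \<longrightarrow> v k = 0)}"
  have vp: "value_pattern s t (\<lambda>i j. \<psi> ((\<alpha> ^ t) ^ i * (\<alpha> ^ s) ^ j)) S = L \<circ> e"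
  proof (rule ext, clarify)
    fix a b
    show "value_pattern s t (\<lambda>i j. \<psi> ((\<alpha> ^ t) ^ i * (\<alpha> ^ s) ^ j)) S (a, b) = (L \<circ> e) (a, b)"
    proof (rule ext, clarify)
      fix i j
      have "\<beta> ^ ((i + a) mod s) * \<gamma> ^ ((j + b) mod t) = e (a,b) * e (i,j)"
        using pow_mod_eq[OF bs] pow_mod_eq[OF gt] by (simp add: e_def power_add mult_ac)
      thus "value_pattern s t (\<lambda>i j. \<psi> ((\<alpha> ^ t) ^ i * (\<alpha> ^ s) ^ j)) S (a, b) (i, j) = (L \<circ> e) (a, b) (i, j)"
        by (simp add: value_pattern_def L_def \<beta>_def \<gamma>_def)
    qed
  qed
  have nzV: "nonzero_Fp_vectors S = V - {\<lambda>_. 0}" unfolding nonzero_Fp_vectors_def V_def by auto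
  have samp: "sampling_pattern s t (\<lambda>i j. \<psi> ((\<alpha> ^ t) ^ i * (\<alpha> ^ s) ^ j)) S
      \<longleftrightarrow> bij_betw L (UNIV - {0}) (V - {\<lambda>_. 0})"
    unfolding sampling_pattern_def vp nzV I_def[symmetric]
    by (rule sym, rule bij_betw_comp_iff[OF e_bij])
  have psiP: "\<forall>y. \<psi> y \<in> prime_subfield" using lin unfolding Fp_linear_functional_def by blast
  have LV: "L x \<in> V" for x unfolding L_def V_def using psiP P_0[where 'a='a] by simp
  have L0: "L 0 = (\<lambda>_. 0)" by (rule ext) (simp add: L_def lin_0[OF lin])
  have finS: "finite S" using SI by (rule finite_subset) auto
  have Se: "inj_on e S" using e_inj SI I_def inj_on_subset by blast
  define X where "X = A_restr \<beta> \<gamma> S"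
  have X: "X = e ` S" unfolding X_def A_restr_def e_def by simp
  have cardX: "card X = n" using X card_image[OF Se] cardS by simp
  have cardV: "card V = card (prime_subfield::'a set) ^ n" unfolding V_def using card_V[OF finS] cardS by simp
  have basis: "basis_pattern (\<alpha> ^ t) (\<alpha> ^ s) S \<longleftrightarrow> Fp_basis X" unfolding basis_pattern_def X_def \<beta>_def \<gamma>_def ..
  show ?thesis unfolding samp basis
  proof
    assume bij: "bij_betw L (UNIV - {0}) (V - {\<lambda>_. 0})"
    have img: "L ` UNIV = V"
    proof
      show "L ` UNIV \<subseteq> V" using LV by blast
      show "V \<subseteq> L ` UNIV"
      proof
        fix v assume v: "v \<in> V"
        show "v \<in> L ` UNIV"
        proof (cases "v = (\<lambda>_. 0)")
          case True thus ?thesis using L0 by (metis rangeI)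
        next
          case False
          hence "v \<in> L ` (UNIV - {0})" using v bij by (simp add: bij_betw_def)
          thus ?thesis by blast
        qed
      qed
    qed
    have injL: "inj_on L UNIV"
    proof (rule inj_onI)
      fix x y :: 'a assume xy: "L x = L y"
      have imnz: "L ` (UNIV - {0}) = V - {\<lambda>_. 0}" and inj0: "inj_on L (UNIV - {0})"
        using bij unfolding bij_betw_def by simp_all
      have nz: "L z \<noteq> (\<lambda>_. 0)" if "z \<noteq> 0" for z
      proof -
        have "L z \<in> L ` (UNIV - {0})" using that by blast
        hence "L z \<in> V - {\<lambda>_. 0}" using imnz by simp
        thus ?thesis by simp
      qed
      show "x = y"
      proof (cases "x = 0 \<or> y = 0")
        case True thus ?thesis using nz L0 xy by metis
      next
        case False
        thus ?thesis using inj_onD[OF inj0 xy] by simp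
      qed
    qed
    have cV: "card V = CARD('a)" using card_image[OF injL] img by simp
    have ind: "\<forall>c. (\<forall>x\<in>X. c x \<in> prime_subfield) \<longrightarrow> (\<Sum>x\<in>X. c x * x) = 0 \<longrightarrow> (\<forall>x\<in>X. c x = 0)"
    proof (intro allI impI ballI)
      fix c x0 assume cP: "\<forall>x\<in>X. c x \<in> prime_subfield" and c0: "(\<Sum>x\<in>X. c x * x) = 0" and x0: "x0 \<in> X"
      obtain k0 where k0: "k0 \<in> S" "x0 = e k0" using x0 X by auto
      define \<delta> where "\<delta> = (\<lambda>k. if k = k0 then (1::'a) else 0)"
      have "\<delta> k0 \<noteq> 0" unfolding \<delta>_def by simp
      hence "\<delta> \<noteq> (\<lambda>_. 0)" by (auto dest: fun_cong[of _ _ k0])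
      moreover have "\<delta> \<in> V" using k0 P_0[where 'a='a] P_1[where 'a='a] unfolding \<delta>_def V_def by simp
      ultimately have "\<delta> \<in> V - {\<lambda>_. 0}" by simp
      hence "\<delta> \<in> L ` UNIV" using img by simp
      then obtain x where x: "L x = \<delta>" by blast
      have xk: "\<psi> (x * e k) = \<delta> k" if "k \<in> S" for k using fun_cong[OF x, of k] that by (simp add: L_def)
      have "0 = \<psi> (x * (\<Sum>z\<in>X. c z * z))" using c0 lin_0[OF lin] by simp
      also have "\<dots> = (\<Sum>z\<in>X. c z * \<psi> (x * z))"
        by (rule lin_comb[OF lin cP])
      also have "\<dots> = (\<Sum>k\<in>S. c (e k) * \<psi> (x * e k))" unfolding X using sum.reindex[OF Se] by simp
      also have "\<dots> = (\<Sum>k\<in>S. c (e k) * \<delta> k)" using xk by simp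
      also have "\<dots> = (\<Sum>k\<in>S. if k = k0 then c (e k) else 0)" by (rule sum.cong) (simp_all add: \<delta>_def)
      also have "\<dots> = c (e k0)" using k0 finS by (simp add: sum.delta)
      finally show "c x0 = 0" using k0 by simp
    qed
    have finX: "finite X" using X finS by simp
    have "card (prime_subfield::'a set) ^ card X = CARD('a)" using cV cardV cardX by simp
    hence span: "\<forall>y. \<exists>c. (\<forall>x\<in>X. c x \<in> prime_subfield) \<and> y = (\<Sum>x\<in>X. c x * x)"
      using indep_span[OF finX ind] by blast
    show "Fp_basis X" unfolding Fp_basis_def by (intro conjI finX ind span)
  next
    assume B: "Fp_basis X"
    have Z: "x = 0" if "\<forall>k\<in>S. \<psi> (x * e k) = 0" for x
    proof (rule ccontr)
      assume x0: "x \<noteq> 0"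
      have "\<psi> (x * y) = 0" for y
      proof -
        obtain c where c: "\<forall>z\<in>X. c z \<in> prime_subfield" "y = (\<Sum>z\<in>X. c z * z)"
          using B unfolding Fp_basis_def by blast
        have "\<psi> (x * y) = (\<Sum>z\<in>X. c z * \<psi> (x * z))"
          unfolding c(2) by (rule lin_comb[OF lin c(1)])
        also have "\<dots> = 0" using that X by (auto intro!: sum.neutral)
        finally show ?thesis .
      qed
      hence "\<psi> (x * (w / x)) = 0" for w by blast
      hence "\<psi> w = 0" for w using x0 by simp
      thus False using psi_nz by blast
    qed
    have injL: "inj_on L UNIV"
    proof (rule inj_onI)
      fix x y :: 'a assume xy: "L x = L y"
      have "\<psi> ((x - y) * e k) = 0" if "k \<in> S" for k
      proof -
        have "\<psi> (x * e k) = \<psi> (y * e k)" using fun_cong[OF xy, of k] that by (simp add: L_def)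
        thus ?thesis by (simp add: left_diff_distrib lin_diff[OF lin])
      qed
      hence "\<forall>k\<in>S. \<psi> ((x - y) * e k) = 0" by blast
      hence "x - y = 0" by (rule Z)
      thus "x = y" by simp
    qed
    have cV: "card V = CARD('a)" using cardV basis_card[OF B] cardX by simp
    have fV: "finite V"
    proof (rule card_ge_0_finite)
      show "card V > 0" using cV by simp
    qed
    have sV: "L ` UNIV \<subseteq> V" using LV by blast
    have "card (L ` UNIV) = card V" using card_image[OF injL] cV by simp
    hence img: "L ` UNIV = V" by (rule card_subset_eq[OF fV sV])
    have "L ` (UNIV - {0}) = V - {\<lambda>_. 0}"
      using inj_on_image_set_diff[OF injL, of UNIV "{0}"] img L0 by simp
    moreover have "inj_on L (UNIV - {0})" using inj_on_subset[OF injL subset_UNIV] .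
    ultimately show "bij_betw L (UNIV - {0}) (V - {\<lambda>_. 0})" by (simp add: bij_betw_def)
  qed
qed

end
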